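(* Let $d$ be a compatible metric on the Cantor space $\mathbf{C}$ and let $h:\mathbf{C}\to\mathbf{C}$ be a homeomorphism which is an isometry such that the orbit $\mathrm{orb}(x,h)$ is nowhere dense in $\mathbf{C}$ for every $x\in\mathbf{C}$. Then there exist $\Phi=(\varphi^L,\varphi^U)$ such that $\mathbf{F}_\Phi$ is a Lelek fence and a homeomorphism $\hat h$ of $\mathbf{F}_\Phi$ which is an isometry such that $h$ is a factor of $\hat h$. Moreover, if $\{K_n\}$ is a sequence of closed, $h$-invariant, nowhere dense subsets of $\mathbf{C}$, then $\Phi$ can be chosen so that $\varphi^U(x)>0$ for all $x\in\bigcup_n K_n$.
   Context: For $\Phi=(\varphi^L,\varphi^U)$ with $\varphi^L,\varphi^U:\mathbf{C}\to[0,1]$, $\varphi^L$ lower semicontinuous, $\varphi^U$ upper semicontinuous, $\varphi^L\le\varphi^U$, the fence is $\mathbf{F}_\Phi=\{(x,t)\in\mathbf{C}\times[0,1]:\varphi^L(x)\le t\le\varphi^U(x)\}$ with the maximum metric of $\mathbf{C}\times[0,1]$. $\mathbf{F}_\Phi$ is a Lelek fence if $\varphi^L\equiv0$, $\varphi^U$ is positive on a dense subset of $\mathbf{C}$, and the graph $\{(x,\varphi^U(x)):x\in\mathbf{C}\}$ is dense in $\mathbf{F}_\Phi$. *)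

theory Defs
  imports "HOL-Analysis.Analysis"
begin

text \<open>The Cantor space, realised as the standard middle-thirds Cantor set in the reals.\<close>
definition cantor_set :: "real set" where
  "cantor_set = {x. \<exists>b :: nat \<Rightarrow> bool. x = (\<Sum>n. (if b n then 2 else 0) / 3 ^ (Suc n))}"

definition compatible_metric :: "real set \<Rightarrow> (real \<Rightarrow> real \<Rightarrow> real) \<Rightarrow> bool" where
  "compatible_metric S d \<longleftrightarrow> Metric_space S d \<and> Metric_space.mtopology S d = top_of_set S"

definition isometry_on :: "'a set \<Rightarrow> ('a \<Rightarrow> 'a \<Rightarrow> real) \<Rightarrow> ('a \<Rightarrow> 'a) \<Rightarrow> bool" where
  "isometry_on S d f \<longleftrightarrow> (\<forall>x\<in>S. \<forall>y\<in>S. d (f x) (f y) = d x y)"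

definition orb :: "'a \<Rightarrow> ('a \<Rightarrow> 'a) \<Rightarrow> 'a set" where
  "orb x h = {(h ^^ n) x | n. True}"

definition nowhere_dense_in :: "'a::topological_space set \<Rightarrow> 'a set \<Rightarrow> bool" where
  "nowhere_dense_in A S \<longleftrightarrow> A \<subseteq> S \<and>
     (top_of_set S) interior_of ((top_of_set S) closure_of A) = {}"

definition lower_semicont_on :: "'a::topological_space set \<Rightarrow> ('a \<Rightarrow> real) \<Rightarrow> bool" where
  "lower_semicont_on S f \<longleftrightarrow> (\<forall>a. openin (top_of_set S) {x\<in>S. f x > a})"

definition upper_semicont_on :: "'a::topological_space set \<Rightarrow> ('a \<Rightarrow> real) \<Rightarrow> bool" where
  "upper_semicont_on S f \<longleftrightarrow> (\<forall>a. openin (top_of_set S) {x\<in>S. f x < a})"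

definition admissible_pair :: "(real \<Rightarrow> real) \<Rightarrow> (real \<Rightarrow> real) \<Rightarrow> bool" where
  "admissible_pair phiL phiU \<longleftrightarrow>
     (\<forall>x\<in>cantor_set. 0 \<le> phiL x \<and> phiL x \<le> phiU x \<and> phiU x \<le> 1) \<and>
     lower_semicont_on cantor_set phiL \<and> upper_semicont_on cantor_set phiU"

definition fence :: "(real \<Rightarrow> real) \<Rightarrow> (real \<Rightarrow> real) \<Rightarrow> (real \<times> real) set" where
  "fence phiL phiU = {(x, t). x \<in> cantor_set \<and> 0 \<le> t \<and> t \<le> 1 \<and> phiL x \<le> t \<and> t \<le> phiU x}"

definition max_metric :: "(real \<Rightarrow> real \<Rightarrow> real) \<Rightarrow> real \<times> real \<Rightarrow> real \<times> real \<Rightarrow> real" where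
  "max_metric d p q = max (d (fst p) (fst q)) \<bar>snd p - snd q\<bar>"

text \<open>Lelek fence. Density of the graph is taken in the topology of C \<times> [0,1], which
  (d being compatible) is the topology of the maximum metric, i.e. the Euclidean one.\<close>
definition Lelek_fence :: "(real \<Rightarrow> real) \<Rightarrow> (real \<Rightarrow> real) \<Rightarrow> bool" where
  "Lelek_fence phiL phiU \<longleftrightarrow>
     (\<forall>x\<in>cantor_set. phiL x = 0) \<and>
     (\<exists>D \<subseteq> cantor_set. cantor_set \<subseteq> closure D \<and> (\<forall>x\<in>D. phiU x > 0)) \<and>
     fence phiL phiU \<subseteq> closure {(x, phiU x) | x. x \<in> cantor_set}"

definition is_factor :: "'b::topological_space set \<Rightarrow> ('b \<Rightarrow> 'b) \<Rightarrow> 'a::topological_space set \<Rightarrow> ('a \<Rightarrow> 'a) \<Rightarrow> bool" where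
  "is_factor Y g X f \<longleftrightarrow> (\<exists>\<pi>. continuous_on X \<pi> \<and> \<pi> ` X = Y \<and> (\<forall>p\<in>X. \<pi> (f p) = g (\<pi> p)))"

end

theory Submission
  imports Defs
begin


lemma cantor_compact: "compact cantor_set"
proof -
  define f where "f = (\<lambda>b::nat\<Rightarrow>bool. (\<Sum>n. (if b n then 2 else 0) / 3 ^ (Suc n) :: real))"
  have eq: "cantor_set = f ` UNIV" unfolding cantor_set_def f_def by auto
  have cU: "compact (UNIV :: (nat \<Rightarrow> bool) set)"
  proof -
    have "compact_space (product_topology (\<lambda>i. (euclidean :: bool topology)) (UNIV::nat set))"
      unfolding compact_space_product_topology
      by (simp add: compact_space_def finite_imp_compact)
    then show ?thesis
      by (simp add: euclidean_product_topology compact_space_def)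
  qed
  have sm: "summable (\<lambda>n. 2 / 3 ^ Suc n :: real)"
  proof -
    have "summable (\<lambda>n. (2/3) * (1/3::real) ^ n)"
      by (intro summable_mult summable_geometric) auto
    then show ?thesis by (simp add: power_divide field_simps)
  qed
  have ul: "uniform_limit UNIV (\<lambda>n b. \<Sum>i<n. (if b i then 2 else 0) / 3 ^ (Suc i) :: real) f sequentially"
    unfolding f_def
    by (rule Weierstrass_m_test[OF _ sm]) auto
  have "continuous_on UNIV f"
  proof (rule uniform_limit_theorem[OF _ ul])
    show "\<forall>\<^sub>F n in sequentially. continuous_on UNIV (\<lambda>b::nat\<Rightarrow>bool. \<Sum>i<n. (if b i then 2 else 0) / 3 ^ (Suc i) :: real)"
    proof (intro always_eventually allI continuous_on_sum)
      fix n i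
      have "continuous_on UNIV (\<lambda>b::nat\<Rightarrow>bool. b i)" by simp
      moreover have "continuous_on (range (\<lambda>b::nat\<Rightarrow>bool. b i)) (\<lambda>c::bool. (if c then 2 else 0) / 3 ^ (Suc i) :: real)"
        by simp
      ultimately show "continuous_on UNIV (\<lambda>b::nat\<Rightarrow>bool. (if b i then 2 else 0) / 3 ^ (Suc i) :: real)"
        using continuous_on_compose[of UNIV "\<lambda>b::nat\<Rightarrow>bool. b i"] by (simp add: o_def)
    qed
  qed auto
  then show ?thesis using eq cU compact_continuous_image by metis
qed



locale LS = Metric_space cantor_set d for d :: "real \<Rightarrow> real \<Rightarrow> real" +
  fixes h :: "real \<Rightarrow> real" and K :: "nat \<Rightarrow> real set"
  assumes top: "mtopology = top_of_set cantor_set"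
    and hC: "h ` cantor_set \<subseteq> cantor_set"
    and iso: "isometry_on cantor_set d h"
    and nwd: "\<forall>x\<in>cantor_set. nowhere_dense_in (orb x h) cantor_set"
    and Kc: "\<And>n. closed (K n)" and Kh: "\<And>n. h ` K n \<subseteq> K n"
    and Knwd: "\<And>n. nowhere_dense_in (K n) cantor_set"
begin

abbreviation "C \<equiv> cantor_set"

lemma hnC: "x \<in> C \<Longrightarrow> (h ^^ n) x \<in> C"
  by (induction n) (use hC in auto)

lemma hn_iso: "x \<in> C \<Longrightarrow> y \<in> C \<Longrightarrow> d ((h ^^ n) x) ((h ^^ n) y) = d x y"
  by (induction n) (use iso hnC in \<open>auto simp: isometry_on_def\<close>)

lemma hn_add: "(h ^^ (a + b)) x = (h ^^ a) ((h ^^ b) x)"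
  by (simp add: funpow_add)

lemma cptC: "compactin mtopology C"
  using cantor_compact by (simp add: top compactin_subtopology)

lemma recur:
  assumes x: "x \<in> C" and e: "e > 0"
  shows "\<exists>N\<ge>n. d ((h ^^ N) x) x < e"
proof -
  define \<sigma> where "\<sigma> = (\<lambda>m. (h ^^ (m * Suc n)) x)"
  have "range \<sigma> \<subseteq> C" using hnC x by (auto simp: \<sigma>_def)
  then obtain l r where l: "l \<in> C" "strict_mono r" "limitin mtopology (\<sigma> \<circ> r) l sequentially"
    using cptC unfolding compactin_sequentially by blast
  then have "\<forall>\<epsilon>>0. eventually (\<lambda>k. (\<sigma> \<circ> r) k \<in> C \<and> d ((\<sigma> \<circ> r) k) l < \<epsilon>) sequentially"
    using limitin_metric by blast
  then have "eventually (\<lambda>k. (\<sigma> \<circ> r) k \<in> C \<and> d ((\<sigma> \<circ> r) k) l < e/2) sequentially"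
    using e by (meson half_gt_zero)
  then have "eventually (\<lambda>k. d (\<sigma> (r k)) l < e/2) sequentially"
    by (auto elim: eventually_mono)
  then obtain k0 where k0: "\<And>k. k \<ge> k0 \<Longrightarrow> d (\<sigma> (r k)) l < e/2"
    by (auto simp: eventually_sequentially)
  define a where "a = r k0" define b where "b = r (Suc k0)"
  have ab: "a < b" using l(2) by (simp add: a_def b_def strict_mono_def)
  have "d (\<sigma> a) (\<sigma> b) \<le> d (\<sigma> a) l + d l (\<sigma> b)"
    using triangle \<open>range \<sigma> \<subseteq> C\<close> l(1) by (meson range_subsetD)
  also have "\<dots> < e" using k0[of k0] k0[of "Suc k0"] commute[of l] by (simp add: a_def b_def)
  finally have lt: "d (\<sigma> a) (\<sigma> b) < e" .
  define N where "N = (b - a) * Suc n"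
  have bsplit: "b * Suc n = N + a * Suc n" unfolding N_def
    by (metis add_mult_distrib ab le_add_diff_inverse2 less_imp_le)
  have "d (\<sigma> a) (\<sigma> b) = d ((h ^^ (a * Suc n)) x) ((h ^^ (a * Suc n)) ((h ^^ N) x))"
    unfolding \<sigma>_def bsplit by (metis hn_add add.commute)
  also have "\<dots> = d x ((h ^^ N) x)" using hn_iso hnC x by simp
  finally have "d ((h ^^ N) x) x < e" using lt commute by simp
  moreover have "N \<ge> n"
  proof -
    have "1 \<le> b - a" using ab by simp
    then have "1 * Suc n \<le> (b - a) * Suc n" by (rule mult_le_mono1)
    then show ?thesis by (simp add: N_def)
  qed
  ultimately show ?thesis by blast
qed

definition D :: "real \<Rightarrow> real \<Rightarrow> real" where
  "D y z = (INF p\<in>UNIV. d ((h ^^ fst p) y) ((h ^^ snd p) z))"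

lemma D_le: "D y z \<le> d ((h ^^ a) y) ((h ^^ b) z)"
  unfolding D_def
  by (rule cINF_lower2[where x="(a,b)"]) (auto intro: bdd_belowI2[of _ 0])

lemma D_ge: "(\<And>a b. c \<le> d ((h ^^ a) y) ((h ^^ b) z)) \<Longrightarrow> c \<le> D y z"
  unfolding D_def by (rule cINF_greatest) auto

lemma D_nonneg: "0 \<le> D y z"
  by (rule D_ge) simp

lemma D_self: "z \<in> C \<Longrightarrow> D z z = 0"
  using D_le[of z z 0 0] D_nonneg[of z z] by simp

lemma D_sym: "D y z = D z y"
  by (intro antisym D_ge) (metis D_le commute)+

lemma D_h: assumes "y \<in> C" "z \<in> C" shows "D (h y) z = D y z"
proof (rule antisym)
  show "D (h y) z \<le> D y z"
  proof (rule D_ge)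
    fix a b
    have "D (h y) z \<le> d ((h ^^ a) (h y)) ((h ^^ Suc b) z)" by (rule D_le)
    also have "\<dots> = d (h ((h ^^ a) y)) (h ((h ^^ b) z))"
      by (simp add: funpow_swap1)
    also have "\<dots> = d ((h ^^ a) y) ((h ^^ b) z)"
      using iso hnC assms by (simp add: isometry_on_def)
    finally show "D (h y) z \<le> d ((h ^^ a) y) ((h ^^ b) z)" .
  qed
  show "D y z \<le> D (h y) z"
  proof (rule D_ge)
    fix a b
    have "D y z \<le> d ((h ^^ Suc a) y) ((h ^^ b) z)" by (rule D_le)
    then show "D y z \<le> d ((h ^^ a) (h y)) ((h ^^ b) z)"
      by (simp add: funpow_Suc_right del: funpow.simps)
  qed
qed

lemma D_lip: assumes "y \<in> C" "y' \<in> C" "z \<in> C" shows "D y z \<le> d y y' + D y' z"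
proof -
  have "D y z - d y y' \<le> D y' z"
  proof (rule D_ge)
    fix a b
    have "D y z \<le> d ((h ^^ a) y) ((h ^^ b) z)" by (rule D_le)
    also have "\<dots> \<le> d ((h ^^ a) y) ((h ^^ a) y') + d ((h ^^ a) y') ((h ^^ b) z)"
      using triangle hnC assms by blast
    also have "\<dots> = d y y' + d ((h ^^ a) y') ((h ^^ b) z)"
      using hn_iso assms by simp
    finally show "D y z - d y y' \<le> d ((h ^^ a) y') ((h ^^ b) z)" by simp
  qed
  then show ?thesis by simp
qed

lemma D_rec:
  assumes z: "z \<in> C" and y: "y \<in> C" and r: "\<And>a. r \<le> d z ((h ^^ a) y)"
  shows "r \<le> D z y"
proof (rule D_ge)
  fix a b
  show "r \<le> d ((h ^^ a) z) ((h ^^ b) y)"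
  proof (rule field_le_epsilon)
    fix e :: real assume e: "e > 0"
    obtain N where N: "N \<ge> a" "d ((h ^^ N) z) z < e" using recur[OF z e] by blast
    have NN: "N = (N - a) + a" using N by simp
    have "d ((h ^^ a) z) ((h ^^ b) y) = d ((h ^^ (N - a)) ((h ^^ a) z)) ((h ^^ (N - a)) ((h ^^ b) y))"
      using hn_iso hnC z y by simp
    also have "\<dots> = d ((h ^^ N) z) ((h ^^ (N - a + b)) y)"
      by (metis NN hn_add)
    finally have eq: "d ((h ^^ a) z) ((h ^^ b) y) = d ((h ^^ N) z) ((h ^^ (N - a + b)) y)" .
    have "d z ((h ^^ (N - a + b)) y) \<le> d z ((h ^^ N) z) + d ((h ^^ N) z) ((h ^^ (N - a + b)) y)"
      using triangle hnC z y by blast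
    then show "r \<le> d ((h ^^ a) z) ((h ^^ b) y) + e"
      using r[of "N - a + b"] N(2) eq commute[of z "(h ^^ N) z"] by linarith
  qed
qed

end



lemma fin_pos:
  assumes "finite I" "\<forall>j\<in>I. \<exists>r>0. P j r" "\<And>j r r'. P j r \<Longrightarrow> 0 < r' \<Longrightarrow> r' \<le> r \<Longrightarrow> P j r'"
  shows "\<exists>r>0. \<forall>j\<in>I. P j (r::real)"
  using assms(1,2)
proof (induction I rule: finite_induct)
  case empty then show ?case by (auto intro: exI[of _ 1])
next
  case (insert x F)
  then obtain r1 where r1: "r1 > 0" "\<forall>j\<in>F. P j r1" by auto
  obtain r2 where r2: "r2 > 0" "P x r2" using insert by auto
  show ?case
    by (rule exI[of _ "min r1 r2"]) (use r1 r2 assms(3) in auto)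
qed

lemma interior_Union_empty:
  assumes "finite F" "\<forall>S\<in>F. closedin X S \<and> X interior_of S = {}"
  shows "X interior_of (\<Union>F) = {}"
  using assms
proof (induction F rule: finite_induct)
  case empty then show ?case by simp
next
  case (insert S F)
  then show ?case using interior_of_union_eq_empty[of X S "\<Union>F"] by auto
qed

lemma cantor_nonempty: "cantor_set \<noteq> {}"
proof -
  have "(0::real) = (\<Sum>n. (if (\<lambda>_. False) n then 2 else 0) / 3 ^ (Suc n))" by simp
  then show ?thesis unfolding cantor_set_def by blast
qed

context LS begin

lemma open_lt:
  assumes L: "L \<ge> 0" and lip: "\<And>y y'. y \<in> C \<Longrightarrow> y' \<in> C \<Longrightarrow> \<phi> y' \<le> \<phi> y + L * d y y'"
  shows "openin (top_of_set C) {y\<in>C. \<phi> y < a}"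
  unfolding top[symmetric] openin_mtopology
proof (intro conjI allI impI)
  show "{y \<in> C. \<phi> y < a} \<subseteq> C" by auto
  fix y assume y: "y \<in> {y \<in> C. \<phi> y < a}"
  define r where "r = (a - \<phi> y) / (L + 1)"
  have r: "r > 0" using y L by (simp add: r_def)
  have "mball y r \<subseteq> {y \<in> C. \<phi> y < a}"
  proof
    fix y' assume "y' \<in> mball y r"
    then have y': "y' \<in> C" "d y y' < r" by auto
    have "L * d y y' \<le> L * r" using y' L by (simp add: mult_left_mono)
    also have "\<dots> < (L + 1) * r" using r by (simp add: algebra_simps)
    also have "\<dots> = a - \<phi> y" using L by (simp add: r_def)
    finally show "y' \<in> {y \<in> C. \<phi> y < a}" using lip[of y y'] y y' by auto
  qed
  then show "\<exists>r>0. mball y r \<subseteq> {y \<in> C. \<phi> y < a}" using r by blast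
qed

lemma open_gt:
  assumes L: "L \<ge> 0" and lip: "\<And>y y'. y \<in> C \<Longrightarrow> y' \<in> C \<Longrightarrow> \<phi> y' \<le> \<phi> y + L * d y y'"
  shows "openin (top_of_set C) {y\<in>C. a < \<phi> y}"
proof -
  have "openin (top_of_set C) {y\<in>C. (\<lambda>y. - \<phi> y) y < - a}"
  proof (rule open_lt[OF L])
    fix y y' assume "y \<in> C" "y' \<in> C"
    then have "\<phi> y \<le> \<phi> y' + L * d y' y" using lip[of y' y] by blast
    moreover have "L * d y' y = L * d y y'" using commute[of y' y] by simp
    ultimately show "- \<phi> y' \<le> - \<phi> y + L * d y y'" by linarith
  qed
  then show ?thesis by simp
qed

lemma ball_avoid:
  assumes "openin (top_of_set C) U" "y \<in> U"
  shows "\<exists>r>0. \<forall>y'\<in>C. d y y' < r \<longrightarrow> y' \<in> U"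
proof -
  have "openin mtopology U" using assms top by simp
  then obtain r where "r > 0" "mball y r \<subseteq> U" using assms(2) openin_mtopology by blast
  moreover have "y \<in> C" using \<open>openin mtopology U\<close> assms(2) openin_subset by fastforce
  ultimately show ?thesis
  proof (intro exI[of _ r] conjI ballI impI)
    fix y' assume "y' \<in> C" "d y y' < r"
    then have "y' \<in> mball y r" using \<open>y \<in> C\<close> by simp
    then show "y' \<in> U" using \<open>mball y r \<subseteq> U\<close> by blast
  qed
qed

lemma K_C: "K m \<subseteq> C" using Knwd by (simp add: nowhere_dense_in_def)

lemma K_closedin: "closedin (top_of_set C) (K m)"
  using Kc K_C by (simp add: closed_subset)

lemma K_h: "k \<in> K m \<Longrightarrow> (h ^^ a) k \<in> K m"
  by (induction a) (use Kh in auto)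

definition G :: "real \<times> real \<times> real \<Rightarrow> real \<Rightarrow> real" where
  "G p y = max (fst (snd p)) (D y (fst p) / snd (snd p))"

lemma G_lip:
  assumes "fst p \<in> C" "snd (snd p) > 0" "y \<in> C" "y' \<in> C"
  shows "G p y' \<le> G p y + (1 / snd (snd p)) * d y y'"
proof -
  have "D y' (fst p) \<le> d y' y + D y (fst p)" using D_lip assms by blast
  then have "D y' (fst p) / snd (snd p) \<le> D y (fst p) / snd (snd p) + (1 / snd (snd p)) * d y y'"
    using assms(2) commute[of y y'] by (simp add: divide_right_mono add_divide_distrib[symmetric])
  moreover have "0 \<le> d y y' / snd (snd p)" using assms(2) by simp
  ultimately show ?thesis unfolding G_def by (auto simp: max_def)
qed

fun Fp :: "(real \<times> real \<times> real) list \<Rightarrow> real \<Rightarrow> real" where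
  "Fp [] y = 1"
| "Fp (p # L) y = min (G p y) (Fp L y)"

lemma Fp_le1: "Fp L y \<le> 1" by (induction L) auto
lemma Fp_leG: "p \<in> set L \<Longrightarrow> Fp L y \<le> G p y" by (induction L) auto
lemma Fp_ge: "c \<le> 1 \<Longrightarrow> (\<forall>p\<in>set L. c \<le> G p y) \<Longrightarrow> c \<le> Fp L y" by (induction L) auto

lemma Fp_open:
  assumes "\<forall>p\<in>set L. fst p \<in> C \<and> snd (snd p) > 0"
  shows "openin (top_of_set C) {y\<in>C. q < Fp L y}"
  using assms
proof (induction L)
  case Nil
  then show ?case by (cases "q < 1") auto
next
  case (Cons p L)
  have "openin (top_of_set C) {y\<in>C. q < G p y}"
    by (rule open_gt[where L="1 / snd (snd p)"]) (use Cons.prems G_lip in auto)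
  moreover have "{y\<in>C. q < Fp (p # L) y} = {y\<in>C. q < G p y} \<inter> {y\<in>C. q < Fp L y}" by auto
  ultimately show ?case using Cons by auto
qed

definition A :: "(real \<times> real \<times> real) list \<Rightarrow> nat \<Rightarrow> real set" where
  "A L i = \<Union>(((\<lambda>p. top_of_set C closure_of orb (fst p) h) ` set L) \<union> (K ` {..i}))"

lemma orb_C: "z \<in> C \<Longrightarrow> orb z h \<subseteq> C" using hnC by (auto simp: orb_def)

lemma avoid_exists:
  assumes "\<forall>p\<in>set L. fst p \<in> C" "openin (top_of_set C) U" "U \<noteq> {}"
  shows "\<exists>y\<in>U. y \<notin> A L i"
proof (rule ccontr)
  assume "\<not> ?thesis"
  then have sub: "U \<subseteq> A L i" by auto
  have "top_of_set C interior_of A L i = {}"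
    unfolding A_def
  proof (rule interior_Union_empty)
    show "finite (((\<lambda>p. top_of_set C closure_of orb (fst p) h) ` set L) \<union> (K ` {..i}))" by simp
    show "\<forall>S\<in>((\<lambda>p. top_of_set C closure_of orb (fst p) h) ` set L) \<union> (K ` {..i}).
          closedin (top_of_set C) S \<and> top_of_set C interior_of S = {}"
    proof
      fix S assume "S \<in> ((\<lambda>p. top_of_set C closure_of orb (fst p) h) ` set L) \<union> (K ` {..i})"
      then consider p where "p \<in> set L" "S = top_of_set C closure_of orb (fst p) h" | m where "S = K m"
        by blast
      then show "closedin (top_of_set C) S \<and> top_of_set C interior_of S = {}"
      proof cases
        case 1
        then have "fst p \<in> C" using assms(1) by blast
        then have "nowhere_dense_in (orb (fst p) h) C" using nwd by blast
        then have "top_of_set C interior_of S = {}" using 1 by (simp add: nowhere_dense_in_def)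
        then show ?thesis using 1 closedin_closure_of by blast
      next
        case 2
        have e: "top_of_set C closure_of K m = K m" by (simp add: closure_of_eq K_closedin)
        have "top_of_set C interior_of K m = {}" using Knwd[of m] e by (simp add: nowhere_dense_in_def)
        then show ?thesis using K_closedin[of m] 2 by simp
      qed
    qed
  qed
  moreover have "U \<subseteq> top_of_set C interior_of A L i"
    using interior_of_maximal[OF sub assms(2)] .
  ultimately show False using assms(3) by auto
qed

lemma r_exists:
  assumes z: "z \<in> C" "z \<notin> A L i" and L: "\<forall>p\<in>set L. fst p \<in> C"
  shows "\<exists>r>0. (\<forall>p\<in>set L. r \<le> D z (fst p)) \<and> (\<forall>m\<le>i. \<forall>k\<in>K m. r \<le> D k z)"
proof -
  have "\<exists>r>0. \<forall>p\<in>set L. r \<le> D z (fst p)"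
  proof (rule fin_pos[where P="\<lambda>p r. r \<le> D z (fst p)"])
    show "\<forall>p\<in>set L. \<exists>r>0. r \<le> D z (fst p)"
    proof
      fix p assume p: "p \<in> set L"
      let ?S = "top_of_set C closure_of orb (fst p) h"
      have zS: "z \<notin> ?S" using z p by (auto simp: A_def)
      have "closedin (top_of_set C) ?S" by (rule closedin_closure_of)
      from openin_diff[OF openin_topspace this]
      have "openin (top_of_set C) (C - ?S)" by simp
      then obtain r where r: "r > 0" "\<forall>y'\<in>C. d z y' < r \<longrightarrow> y' \<in> C - ?S"
        using ball_avoid zS z by blast
      have "r \<le> D z (fst p)"
      proof (rule D_rec[OF z(1)])
        show "fst p \<in> C" using L p by auto
        fix a
        have "(h ^^ a) (fst p) \<in> orb (fst p) h" by (auto simp: orb_def)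
        then have "(h ^^ a) (fst p) \<in> ?S"
          using closure_of_subset[of "orb (fst p) h" "top_of_set C"] orb_C[of "fst p"] L p by auto
        moreover have "(h ^^ a) (fst p) \<in> C" using hnC L p by auto
        ultimately show "r \<le> d z ((h ^^ a) (fst p))" using r(2) by force
      qed
      then show "\<exists>r>0. r \<le> D z (fst p)" using r by blast
    qed
  qed auto
  then obtain r1 where r1: "r1 > 0" "\<forall>p\<in>set L. r1 \<le> D z (fst p)" by blast
  have "\<exists>r>0. \<forall>m\<in>{..i}. \<forall>k\<in>K m. r \<le> D k z"
  proof (rule fin_pos[where P="\<lambda>m r. \<forall>k\<in>K m. r \<le> D k z"])
    show "\<forall>m\<in>{..i}. \<exists>r>0. \<forall>k\<in>K m. r \<le> D k z"
    proof
      fix m assume m: "m \<in> {..i}"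
      have zK: "z \<notin> K m" using z m by (auto simp: A_def)
      from openin_diff[OF openin_topspace K_closedin[of m]]
      have "openin (top_of_set C) (C - K m)" by simp
      then obtain r where r: "r > 0" "\<forall>y'\<in>C. d z y' < r \<longrightarrow> y' \<in> C - K m"
        using ball_avoid zK z by blast
      have "\<forall>k\<in>K m. r \<le> D k z"
      proof
        fix k assume k: "k \<in> K m"
        have "r \<le> D z k"
        proof (rule D_rec[OF z(1)])
          show "k \<in> C" using k K_C by auto
          fix a
          have "(h ^^ a) k \<in> K m" using K_h k by blast
          moreover have "(h ^^ a) k \<in> C" using \<open>(h ^^ a) k \<in> K m\<close> K_C by auto
          ultimately show "r \<le> d z ((h ^^ a) k)" using r(2) by force
        qed
        then show "r \<le> D k z" by (simp add: D_sym)
      qed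
      then show "\<exists>r>0. \<forall>k\<in>K m. r \<le> D k z" using r by blast
    qed
  qed auto
  then obtain r2 where r2: "r2 > 0" "\<forall>m\<in>{..i}. \<forall>k\<in>K m. r2 \<le> D k z" by blast
  show ?thesis
    by (rule exI[of _ "min r1 r2"]) (use r1 r2 in \<open>auto simp: min_le_iff_disj\<close>)
qed

end



context LS begin

definition reqa :: "nat \<Rightarrow> real" where "reqa i = real_of_rat (fst (from_nat i :: rat \<times> rat \<times> rat))"
definition reqr :: "nat \<Rightarrow> real" where "reqr i = real_of_rat (fst (snd (from_nat i :: rat \<times> rat \<times> rat)))"
definition reqq :: "nat \<Rightarrow> real" where "reqq i = real_of_rat (snd (snd (from_nat i :: rat \<times> rat \<times> rat)))"

definition Bs :: "nat \<Rightarrow> real set" where "Bs i = {y\<in>C. dist y (reqa i) < reqr i}"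

definition succ :: "(real \<times> real \<times> real) list \<Rightarrow> nat \<Rightarrow> bool" where
  "succ L i \<longleftrightarrow> 0 < reqq i \<and> reqq i \<le> 1 \<and> (\<exists>y\<in>Bs i. reqq i < Fp L y \<and> y \<notin> A L i)"

definition choosez :: "(real \<times> real \<times> real) list \<Rightarrow> nat \<Rightarrow> real" where
  "choosez L i = (SOME z. z \<in> Bs i \<and> reqq i < Fp L z \<and> z \<notin> A L i)"

definition chooseT :: "(real \<times> real \<times> real) list \<Rightarrow> nat \<Rightarrow> real \<times> real \<times> real" where
  "chooseT L i = (if succ L i then
      (choosez L i, reqq i,
       (SOME r. 0 < r \<and> (\<forall>p\<in>set L. r \<le> D (choosez L i) (fst p)) \<and> (\<forall>m\<le>i. \<forall>k\<in>K m. r \<le> D k (choosez L i))))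
    else ((SOME z. z \<in> C \<and> (Bs i \<noteq> {} \<longrightarrow> z \<in> Bs i)), 1, 1))"

primrec stage :: "nat \<Rightarrow> (real \<times> real \<times> real) list" where
  "stage 0 = []"
| "stage (Suc i) = chooseT (stage i) i # stage i"

definition T :: "nat \<Rightarrow> real \<times> real \<times> real" where "T i = chooseT (stage i) i"
definition tz :: "nat \<Rightarrow> real" where "tz i = fst (T i)"
definition tw :: "nat \<Rightarrow> real" where "tw i = fst (snd (T i))"
definition tr :: "nat \<Rightarrow> real" where "tr i = snd (snd (T i))"

lemma set_stage: "set (stage i) = T ` {..<i}"
  by (induction i) (auto simp: T_def lessThan_Suc)

lemma tz_C: "tz i \<in> C"
proof (cases "succ (stage i) i")
  case True
  then have "\<exists>z. z \<in> Bs i \<and> reqq i < Fp (stage i) z \<and> z \<notin> A (stage i) i"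
    by (auto simp: succ_def)
  then have "choosez (stage i) i \<in> Bs i" unfolding choosez_def by (rule someI2_ex) blast
  then show ?thesis using True by (simp add: tz_def T_def chooseT_def Bs_def)
next
  case False
  have "\<exists>z. z \<in> C \<and> (Bs i \<noteq> {} \<longrightarrow> z \<in> Bs i)"
    using cantor_nonempty by (auto simp: Bs_def)
  then have "(SOME z. z \<in> C \<and> (Bs i \<noteq> {} \<longrightarrow> z \<in> Bs i)) \<in> C" by (rule someI2_ex) blast
  then show ?thesis using False by (simp add: tz_def T_def chooseT_def)
qed

lemma stage_C: "\<forall>p\<in>set (stage i). fst p \<in> C"
  using tz_C by (auto simp: set_stage tz_def)

lemma T_succ:
  assumes "succ (stage i) i"
  shows "tz i \<in> Bs i" "reqq i < Fp (stage i) (tz i)" "tz i \<notin> A (stage i) i" "tw i = reqq i"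
    "0 < tr i" "\<And>j. j < i \<Longrightarrow> tr i \<le> D (tz i) (tz j)" "\<And>m k. m \<le> i \<Longrightarrow> k \<in> K m \<Longrightarrow> tr i \<le> D k (tz i)"
proof -
  have "\<exists>z. z \<in> Bs i \<and> reqq i < Fp (stage i) z \<and> z \<notin> A (stage i) i"
    using assms by (auto simp: succ_def)
  then have z: "choosez (stage i) i \<in> Bs i \<and> reqq i < Fp (stage i) (choosez (stage i) i) \<and> choosez (stage i) i \<notin> A (stage i) i"
    unfolding choosez_def by (rule someI_ex)
  have tzi: "tz i = choosez (stage i) i" using assms by (simp add: tz_def T_def chooseT_def)
  then show "tz i \<in> Bs i" "reqq i < Fp (stage i) (tz i)" "tz i \<notin> A (stage i) i" using z by auto
  show "tw i = reqq i" using assms by (simp add: tw_def T_def chooseT_def)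
  have "\<exists>r>0. (\<forall>p\<in>set (stage i). r \<le> D (choosez (stage i) i) (fst p)) \<and> (\<forall>m\<le>i. \<forall>k\<in>K m. r \<le> D k (choosez (stage i) i))"
    using r_exists[OF _ _ stage_C] z tz_C tzi by metis
  from someI_ex[OF this]
  have s: "0 < (SOME r. 0 < r \<and> (\<forall>p\<in>set (stage i). r \<le> D (choosez (stage i) i) (fst p)) \<and> (\<forall>m\<le>i. \<forall>k\<in>K m. r \<le> D k (choosez (stage i) i))) \<and> (\<forall>p\<in>set (stage i). (SOME r. 0 < r \<and> (\<forall>p\<in>set (stage i). r \<le> D (choosez (stage i) i) (fst p)) \<and> (\<forall>m\<le>i. \<forall>k\<in>K m. r \<le> D k (choosez (stage i) i))) \<le> D (choosez (stage i) i) (fst p)) \<and> (\<forall>m\<le>i. \<forall>k\<in>K m. (SOME r. 0 < r \<and> (\<forall>p\<in>set (stage i). r \<le> D (choosez (stage i) i) (fst p)) \<and> (\<forall>m\<le>i. \<forall>k\<in>K m. r \<le> D k (choosez (stage i) i))) \<le> D k (choosez (stage i) i))" .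
  have eq: "tr i = (SOME r. 0 < r \<and> (\<forall>p\<in>set (stage i). r \<le> D (choosez (stage i) i) (fst p)) \<and> (\<forall>m\<le>i. \<forall>k\<in>K m. r \<le> D k (choosez (stage i) i)))"
    using assms by (simp add: tr_def T_def chooseT_def)
  have r: "0 < tr i \<and> (\<forall>p\<in>set (stage i). tr i \<le> D (choosez (stage i) i) (fst p)) \<and> (\<forall>m\<le>i. \<forall>k\<in>K m. tr i \<le> D k (choosez (stage i) i))"
    unfolding eq by (rule s)
  then show "0 < tr i" by simp
  show "\<And>j. j < i \<Longrightarrow> tr i \<le> D (tz i) (tz j)" using r tzi by (auto simp: set_stage tz_def)
  show "\<And>m k. m \<le> i \<Longrightarrow> k \<in> K m \<Longrightarrow> tr i \<le> D k (tz i)" using r tzi by auto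
qed

lemma T_fail:
  assumes "\<not> succ (stage i) i"
  shows "tw i = 1" "tr i = 1" "Bs i \<noteq> {} \<Longrightarrow> tz i \<in> Bs i"
proof -
  show "tw i = 1" "tr i = 1" using assms by (simp_all add: tw_def tr_def T_def chooseT_def)
  assume ne: "Bs i \<noteq> {}"
  have "\<exists>z. z \<in> C \<and> (Bs i \<noteq> {} \<longrightarrow> z \<in> Bs i)"
    using cantor_nonempty by (auto simp: Bs_def)
  then have "(SOME z. z \<in> C \<and> (Bs i \<noteq> {} \<longrightarrow> z \<in> Bs i)) \<in> Bs i" by (rule someI2_ex) (use ne in blast)
  then show "tz i \<in> Bs i" using assms by (simp add: tz_def T_def chooseT_def)
qed

lemma tw_pos: "0 < tw i" and tw_le1: "tw i \<le> 1" and tr_pos: "0 < tr i"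
proof -
  have "0 < tw i \<and> tw i \<le> 1 \<and> 0 < tr i"
  proof (cases "succ (stage i) i")
    case True
    then show ?thesis using T_succ(4,5)[OF True] by (simp add: succ_def)
  next
    case False
    then show ?thesis using T_fail(1,2)[OF False] by simp
  qed
  then show "0 < tw i" "tw i \<le> 1" "0 < tr i" by auto
qed

lemma G_T: "G (T i) y = max (tw i) (D y (tz i) / tr i)"
  by (simp add: G_def tw_def tz_def tr_def)

lemma G_ge_tw: "tw i \<le> G (T i) y" by (simp add: G_T)

lemma G_later: assumes "j < i" shows "1 \<le> G (T i) (tz j)"
proof (cases "succ (stage i) i")
  case True
  then have "tr i \<le> D (tz j) (tz i)" using T_succ(6)[OF True assms] D_sym by simp
  then have "1 \<le> D (tz j) (tz i) / tr i" using tr_pos[of i] by simp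
  then show ?thesis by (simp add: G_T)
next
  case False then show ?thesis using T_fail by (simp add: G_T)
qed

lemma G_K: assumes "m \<le> i" "y \<in> K m" shows "1 \<le> G (T i) y"
proof (cases "succ (stage i) i")
  case True
  then have "tr i \<le> D y (tz i)" using T_succ(7)[OF True assms] by simp
  then have "1 \<le> D y (tz i) / tr i" using tr_pos[of i] by simp
  then show ?thesis by (simp add: G_T)
next
  case False then show ?thesis using T_fail by (simp add: G_T)
qed

definition F :: "real \<Rightarrow> real" where
  "F y = Inf (insert 1 (range (\<lambda>i. G (T i) y)))"

lemma bddF: "bdd_below (insert 1 (range (\<lambda>i. G (T i) y)))"
  by (rule bdd_belowI[of _ 0]) (auto intro: order_trans[OF less_imp_le[OF tw_pos] G_ge_tw])

lemma F_le1: "F y \<le> 1" unfolding F_def by (rule cInf_lower[OF _ bddF]) simp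
lemma F_leG: "F y \<le> G (T i) y" unfolding F_def by (rule cInf_lower[OF _ bddF]) simp
lemma F_ge: "c \<le> 1 \<Longrightarrow> (\<And>i. c \<le> G (T i) y) \<Longrightarrow> c \<le> F y"
  unfolding F_def by (rule cInf_greatest) auto
lemma F_nonneg: "0 \<le> F y"
  by (rule F_ge) (auto intro: order_trans[OF less_imp_le[OF tw_pos] G_ge_tw])

lemma F_lt_iff: "F y < a \<longleftrightarrow> 1 < a \<or> (\<exists>i. G (T i) y < a)"
  unfolding F_def by (subst cInf_less_iff[OF _ bddF]) auto

lemma Fp_ge_F: "F y \<le> Fp (stage i) y"
  by (rule Fp_ge[OF F_le1]) (auto simp: set_stage F_leG)

lemma F_pos:
  assumes "\<And>i. i \<ge> N \<Longrightarrow> 1 \<le> G (T i) y"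
  shows "0 < F y"
proof -
  define c where "c = Min (insert 1 (tw ` {..<N}))"
  have c: "0 < c" unfolding c_def using tw_pos by (subst Min_gr_iff) auto
  have "c \<le> F y"
  proof (rule F_ge)
    show "c \<le> 1" unfolding c_def by simp
    fix i show "c \<le> G (T i) y"
    proof (cases "i < N")
      case True
      then have "c \<le> tw i" unfolding c_def by simp
      then show ?thesis using G_ge_tw order_trans by blast
    next
      case False
      then have "1 \<le> G (T i) y" using assms by simp
      moreover have "c \<le> 1" unfolding c_def by simp
      ultimately show ?thesis by simp
    qed
  qed
  then show ?thesis using c by simp
qed

lemma F_succ:
  assumes "succ (stage i) i"
  shows "F (tz i) = reqq i"
proof (rule antisym)
  have "G (T i) (tz i) = reqq i"
    using T_succ(4)[OF assms] D_self[OF tz_C] tw_pos[of i] by (simp add: G_T)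
  then show "F (tz i) \<le> reqq i" using F_leG[of "tz i" i] by simp
  show "reqq i \<le> F (tz i)"
  proof (rule F_ge)
    show "reqq i \<le> 1" using assms by (simp add: succ_def)
    fix j
    consider "j < i" | "j = i" | "i < j" by linarith
    then show "reqq i \<le> G (T j) (tz i)"
    proof cases
      case 1
      have "Fp (stage i) (tz i) \<le> G (T j) (tz i)" by (rule Fp_leG) (use 1 in \<open>auto simp: set_stage\<close>)
      then show ?thesis using T_succ(2)[OF assms] by simp
    next
      case 2 then show ?thesis using G_ge_tw[of i "tz i"] T_succ(4)[OF assms] by simp
    next
      case 3 then show ?thesis using G_later[OF 3] \<open>reqq i \<le> 1\<close> by simp
    qed
  qed
qed

lemma F_tz_pos: "0 < F (tz i)"
  by (rule F_pos[of "Suc i"]) (auto intro: G_later)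

lemma F_K_pos: "y \<in> K m \<Longrightarrow> 0 < F y"
  by (rule F_pos[of m]) (auto intro: G_K)

lemma F_h: "y \<in> C \<Longrightarrow> F (h y) = F y"
  unfolding F_def G_T using D_h tz_C by simp

lemma F_usc: "openin (top_of_set C) {y\<in>C. F y < a}"
proof -
  have "{y\<in>C. F y < a} = {y\<in>C. 1 < a} \<union> (\<Union>i. {y\<in>C. G (T i) y < a})"
    by (auto simp: F_lt_iff)
  moreover have "openin (top_of_set C) {y\<in>C. G (T i) y < a}" for i
  proof (rule open_lt[where L="1 / tr i"])
    show "0 \<le> 1 / tr i" using tr_pos[of i] by simp
    fix y y' assume "y \<in> C" "y' \<in> C"
    then show "G (T i) y' \<le> G (T i) y + 1 / tr i * d y y'"
      using G_lip[of "T i" y y'] tz_C[of i] tr_pos[of i] by (simp add: tz_def tr_def)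
  qed
  moreover have "openin (top_of_set C) {y\<in>C. 1 < a}" by (cases "1 < a") auto
  ultimately show ?thesis by (metis (no_types, lifting) openin_Un openin_Union imageE)
qed

end



lemma rat_between: "(x::real) < y \<Longrightarrow> \<exists>q::rat. x < of_rat q \<and> of_rat q < y"
  using Rats_dense_in_real by (metis Rats_cases)

lemma dist_pair_le: "dist (a::real, b::real) (c, d) \<le> dist a c + dist b d"
  unfolding dist_Pair_Pair by (rule sqrt_sum_squares_le_sum) auto

context LS begin

lemma req_surj: "\<exists>i. reqa i = of_rat a \<and> reqr i = of_rat r \<and> reqq i = of_rat q"
  by (rule exI[of _ "to_nat (a, r, q)"]) (simp add: reqa_def reqr_def reqq_def)

lemma Bs_open: "openin (top_of_set C) (Bs i)"
proof -
  have "Bs i = C \<inter> ball (reqa i) (reqr i)" by (auto simp: Bs_def dist_commute)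
  then show ?thesis by auto
qed

lemma tz_Bs: "Bs i \<noteq> {} \<Longrightarrow> tz i \<in> Bs i"
  using T_succ(1) T_fail(3) by blast

lemma find_ball:
  fixes x :: real
  assumes "e > 0"
  shows "\<exists>a r::rat. dist x (of_rat a) < of_rat r \<and> of_rat r < e / 4 \<and> dist x (of_rat a) < e / 8"
proof -
  obtain a::rat where a: "x - e/8 < of_rat a" "of_rat a < x + e/8" using rat_between[of "x - e/8" "x + e/8"] assms by auto
  obtain r::rat where r: "e/8 < of_rat r" "of_rat r < e/4" using rat_between[of "e/8" "e/4"] assms by auto
  have "dist x (of_rat a) < e/8" unfolding dist_real_def abs_less_iff using a by linarith
  then show ?thesis using r by (intro exI[of _ a] exI[of _ r]) auto
qed

lemma dense_pos: assumes "x \<in> C" shows "x \<in> closure {y\<in>C. 0 < F y}"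
  unfolding closure_approachable
proof (intro allI impI)
  fix e :: real assume e: "e > 0"
  obtain a r where ar: "dist x (of_rat a) < of_rat r" "of_rat r < e / 4" "dist x (of_rat a) < e / 8"
    using find_ball[OF e] by blast
  obtain i where i: "reqa i = of_rat a" "reqr i = of_rat r" using req_surj by blast
  have "x \<in> Bs i" using assms ar i by (simp add: Bs_def dist_commute)
  then have z: "tz i \<in> Bs i" using tz_Bs by blast
  have "dist (tz i) x \<le> dist (tz i) (of_rat a) + dist (of_rat a) x" by (rule dist_triangle)
  also have "\<dots> < e"
  proof -
    have "dist (tz i) (of_rat a) < of_rat r" using z i by (simp add: Bs_def)
    then show ?thesis using ar e dist_commute[of x "of_rat a"] by linarith
  qed
  finally show "\<exists>y\<in>{y \<in> C. 0 < F y}. dist y x < e" using tz_C F_tz_pos z by blast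
qed

lemma graph_dense:
  assumes x: "x \<in> C" and t: "0 \<le> t" "t \<le> F x"
  shows "(x, t) \<in> closure {(y, F y) | y. y \<in> C}"
  unfolding closure_approachable
proof (intro allI impI)
  fix e :: real assume e: "e > 0"
  show "\<exists>y\<in>{(y, F y) | y. y \<in> C}. dist y (x, t) < e"
  proof (cases "t = F x")
    case True
    then show ?thesis using x e by auto
  next
    case False
    then have tF: "t < F x" using t by simp
    obtain q::rat where q: "max 0 (t - e/2) < of_rat q" "of_rat q < min (t + e/2) (F x)"
      using rat_between[of "max 0 (t - e/2)" "min (t + e/2) (F x)"] tF t e by auto
    obtain a r where ar: "dist x (of_rat a) < of_rat r" "of_rat r < e / 4" "dist x (of_rat a) < e / 8"
      using find_ball[OF e] by blast
    obtain i where i: "reqa i = of_rat a" "reqr i = of_rat r" "reqq i = of_rat q" using req_surj by blast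
    have xB: "x \<in> Bs i" using x ar i by (simp add: Bs_def dist_commute)
    have "\<exists>y\<in>Bs i \<inter> {y\<in>C. reqq i < Fp (stage i) y}. y \<notin> A (stage i) i"
    proof (rule avoid_exists[OF stage_C])
      have "\<forall>p\<in>set (stage i). fst p \<in> C \<and> snd (snd p) > 0"
        using tz_C tr_pos by (auto simp: set_stage tz_def tr_def)
      then show "openin (top_of_set C) (Bs i \<inter> {y\<in>C. reqq i < Fp (stage i) y})"
        using Bs_open Fp_open by blast
      have "reqq i < Fp (stage i) x" using q i Fp_ge_F[of x i] by simp
      then show "Bs i \<inter> {y\<in>C. reqq i < Fp (stage i) y} \<noteq> {}" using xB x by blast
    qed
    moreover have "real_of_rat q \<le> 1" using q F_le1[of x] by linarith
    ultimately have su: "succ (stage i) i" using q i by (auto simp: succ_def)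
    have Fz: "F (tz i) = of_rat q" using F_succ[OF su] i by simp
    have zB: "tz i \<in> Bs i" using T_succ(1)[OF su] .
    have "dist (tz i) x \<le> dist (tz i) (of_rat a) + dist (of_rat a) x" by (rule dist_triangle)
    also have "\<dots> < e/2"
    proof -
      have "dist (tz i) (of_rat a) < of_rat r" using zB i by (simp add: Bs_def)
      then show ?thesis using ar e dist_commute[of x "of_rat a"] by linarith
    qed
    finally have d1: "dist (tz i) x < e/2" .
    have d2: "dist (F (tz i)) t < e/2" unfolding Fz dist_real_def abs_less_iff using q by auto
    have "dist (tz i, F (tz i)) (x, t) < e"
      using dist_pair_le[of "tz i" "F (tz i)" x t] d1 d2 by linarith
    then show ?thesis using tz_C by blast
  qed
qed

end



lemma main_K:
  fixes d :: "real \<Rightarrow> real \<Rightarrow> real" and h :: "real \<Rightarrow> real" and K :: "nat \<Rightarrow> real set"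
  assumes cm: "compatible_metric cantor_set d"
    and hom: "\<exists>g. homeomorphism cantor_set cantor_set h g"
    and iso: "isometry_on cantor_set d h"
    and nwd: "\<forall>x\<in>cantor_set. nowhere_dense_in (orb x h) cantor_set"
    and KK: "\<forall>n. closed (K n) \<and> h ` K n \<subseteq> K n \<and> nowhere_dense_in (K n) cantor_set"
  shows "\<exists>phiL phiU hh. admissible_pair phiL phiU \<and> Lelek_fence phiL phiU \<and>
              (\<exists>g. homeomorphism (fence phiL phiU) (fence phiL phiU) hh g) \<and>
              isometry_on (fence phiL phiU) (max_metric d) hh \<and>
              is_factor cantor_set h (fence phiL phiU) hh \<and>
              (\<forall>x\<in>(\<Union>n. K n). phiU x > 0)"
proof -
  obtain g where g: "homeomorphism cantor_set cantor_set h g" using hom by blast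
  have ms: "Metric_space cantor_set d" and top: "Metric_space.mtopology cantor_set d = top_of_set cantor_set"
    using cm by (auto simp: compatible_metric_def)
  have hC: "h ` cantor_set \<subseteq> cantor_set" using g by (simp add: homeomorphism_def)
  interpret L: LS d h K
    by (rule LS.intro[OF ms], unfold_locales) (use top hC iso nwd KK in auto)
  let ?C = cantor_set
  let ?phiL = "\<lambda>x::real. 0::real"
  let ?phiU = "L.F"
  let ?hh = "\<lambda>p::real\<times>real. (h (fst p), snd p)"
  let ?gg = "\<lambda>p::real\<times>real. (g (fst p), snd p)"
  have gC: "\<And>x. x \<in> ?C \<Longrightarrow> g x \<in> ?C" and hgx: "\<And>x. x \<in> ?C \<Longrightarrow> h (g x) = x"
    and ghx: "\<And>x. x \<in> ?C \<Longrightarrow> g (h x) = x"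
    and hc: "continuous_on ?C h" and gc: "continuous_on ?C g"
    using g by (auto simp: homeomorphism_def)
  have hC': "\<And>x. x \<in> ?C \<Longrightarrow> h x \<in> ?C" using hC by auto
  have Fg: "\<And>x. x \<in> ?C \<Longrightarrow> L.F (g x) = L.F x"
    using L.F_h gC hgx by metis
  have fence_eq: "fence ?phiL ?phiU = {(x, t). x \<in> ?C \<and> 0 \<le> t \<and> t \<le> L.F x}"
    using L.F_le1 by (auto simp: fence_def intro: order_trans)
  have adm: "admissible_pair ?phiL ?phiU"
    unfolding admissible_pair_def lower_semicont_on_def upper_semicont_on_def
  proof (intro conjI ballI allI)
    fix x show "0 \<le> (0::real)" "0 \<le> L.F x" "L.F x \<le> 1" using L.F_nonneg L.F_le1 by auto
  next
    fix a :: real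
    show "openin (top_of_set ?C) {x \<in> ?C. a < 0}" by (cases "a < 0") auto
    show "openin (top_of_set ?C) {x \<in> ?C. L.F x < a}" by (rule L.F_usc)
  qed
  have lel: "Lelek_fence ?phiL ?phiU"
    unfolding Lelek_fence_def
  proof (intro conjI ballI)
    show "\<exists>D\<subseteq>?C. ?C \<subseteq> closure D \<and> (\<forall>x\<in>D. 0 < L.F x)"
      by (rule exI[of _ "{y\<in>?C. 0 < L.F y}"]) (use L.dense_pos in auto)
    show "fence ?phiL ?phiU \<subseteq> closure {(x, L.F x) |x. x \<in> ?C}"
      unfolding fence_eq using L.graph_dense by auto
  qed simp
  have hom2: "homeomorphism (fence ?phiL ?phiU) (fence ?phiL ?phiU) ?hh ?gg"
    unfolding homeomorphism_def fence_eq
  proof (intro conjI ballI)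
    show "?hh ` {(x, t). x \<in> ?C \<and> 0 \<le> t \<and> t \<le> L.F x} = {(x, t). x \<in> ?C \<and> 0 \<le> t \<and> t \<le> L.F x}"
    proof
      show "?hh ` {(x, t). x \<in> ?C \<and> 0 \<le> t \<and> t \<le> L.F x} \<subseteq> {(x, t). x \<in> ?C \<and> 0 \<le> t \<and> t \<le> L.F x}"
        using hC' L.F_h by auto
      show "{(x, t). x \<in> ?C \<and> 0 \<le> t \<and> t \<le> L.F x} \<subseteq> ?hh ` {(x, t). x \<in> ?C \<and> 0 \<le> t \<and> t \<le> L.F x}"
      proof clarsimp
        fix x t assume "x \<in> ?C" "0 \<le> t" "t \<le> L.F x"
        then show "(x, t) \<in> ?hh ` {(x, t). x \<in> ?C \<and> 0 \<le> t \<and> t \<le> L.F x}"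
          using gC hgx Fg by (auto intro!: image_eqI[of _ _ "(g x, t)"])
      qed
    qed
    show "?gg ` {(x, t). x \<in> ?C \<and> 0 \<le> t \<and> t \<le> L.F x} = {(x, t). x \<in> ?C \<and> 0 \<le> t \<and> t \<le> L.F x}"
    proof
      show "?gg ` {(x, t). x \<in> ?C \<and> 0 \<le> t \<and> t \<le> L.F x} \<subseteq> {(x, t). x \<in> ?C \<and> 0 \<le> t \<and> t \<le> L.F x}"
        using gC Fg by auto
      show "{(x, t). x \<in> ?C \<and> 0 \<le> t \<and> t \<le> L.F x} \<subseteq> ?gg ` {(x, t). x \<in> ?C \<and> 0 \<le> t \<and> t \<le> L.F x}"
      proof clarsimp
        fix x t assume "x \<in> ?C" "0 \<le> t" "t \<le> L.F x"
        then show "(x, t) \<in> ?gg ` {(x, t). x \<in> ?C \<and> 0 \<le> t \<and> t \<le> L.F x}"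
          using hC' ghx L.F_h by (auto intro!: image_eqI[of _ _ "(h x, t)"])
      qed
    qed
    show "continuous_on {(x, t). x \<in> ?C \<and> 0 \<le> t \<and> t \<le> L.F x} ?hh"
      by (intro continuous_intros continuous_on_compose2[OF hc]) auto
    show "continuous_on {(x, t). x \<in> ?C \<and> 0 \<le> t \<and> t \<le> L.F x} ?gg"
      by (intro continuous_intros continuous_on_compose2[OF gc]) auto
  qed (use ghx hgx in auto)
  have isom: "isometry_on (fence ?phiL ?phiU) (max_metric d) ?hh"
    unfolding isometry_on_def max_metric_def fence_eq using iso by (auto simp: isometry_on_def)
  have fac: "is_factor ?C h (fence ?phiL ?phiU) ?hh"
    unfolding is_factor_def
  proof (intro exI[of _ fst] conjI)
    show "continuous_on (fence ?phiL ?phiU) fst" by (intro continuous_intros)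
    show "fst ` fence ?phiL ?phiU = ?C"
    proof
      show "fst ` fence ?phiL ?phiU \<subseteq> ?C" unfolding fence_eq by auto
      show "?C \<subseteq> fst ` fence ?phiL ?phiU"
      proof
        fix x assume "x \<in> ?C"
        then have "(x, 0) \<in> fence ?phiL ?phiU" unfolding fence_eq using L.F_nonneg by auto
        then show "x \<in> fst ` fence ?phiL ?phiU" by (metis fst_conv image_eqI)
      qed
    qed
  qed auto
  have pos: "\<forall>x\<in>(\<Union>n. K n). L.F x > 0" using L.F_K_pos by blast
  show ?thesis using adm lel hom2 isom fac pos by blast
qed

theorem theorem6p5:
  fixes d :: "real \<Rightarrow> real \<Rightarrow> real" and h :: "real \<Rightarrow> real"
  assumes "compatible_metric cantor_set d"
    and "\<exists>g. homeomorphism cantor_set cantor_set h g"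
    and "isometry_on cantor_set d h"
    and "\<forall>x\<in>cantor_set. nowhere_dense_in (orb x h) cantor_set"
  shows "(\<exists>phiL phiU hh. admissible_pair phiL phiU \<and> Lelek_fence phiL phiU \<and>
            (\<exists>g. homeomorphism (fence phiL phiU) (fence phiL phiU) hh g) \<and>
            isometry_on (fence phiL phiU) (max_metric d) hh \<and>
            is_factor cantor_set h (fence phiL phiU) hh)
       \<and> (\<forall>K :: nat \<Rightarrow> real set.
            (\<forall>n. closed (K n) \<and> h ` K n \<subseteq> K n \<and> nowhere_dense_in (K n) cantor_set) \<longrightarrow>
            (\<exists>phiL phiU hh. admissible_pair phiL phiU \<and> Lelek_fence phiL phiU \<and>
              (\<exists>g. homeomorphism (fence phiL phiU) (fence phiL phiU) hh g) \<and>
              isometry_on (fence phiL phiU) (max_metric d) hh \<and>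
              is_factor cantor_set h (fence phiL phiU) hh \<and>
              (\<forall>x\<in>(\<Union>n. K n). phiU x > 0)))"
proof (intro conjI allI impI)
  have "\<forall>n. closed ((\<lambda>_. {}::real set) n) \<and> h ` (\<lambda>_. {}) n \<subseteq> (\<lambda>_. {}) n \<and> nowhere_dense_in ((\<lambda>_. {}) n) cantor_set"
    by (simp add: nowhere_dense_in_def)
  from main_K[OF assms this]
  show "\<exists>phiL phiU hh. admissible_pair phiL phiU \<and> Lelek_fence phiL phiU \<and>
            (\<exists>g. homeomorphism (fence phiL phiU) (fence phiL phiU) hh g) \<and>
            isometry_on (fence phiL phiU) (max_metric d) hh \<and>
            is_factor cantor_set h (fence phiL phiU) hh" by blast
next
  fix K :: "nat \<Rightarrow> real set"
  assume "\<forall>n. closed (K n) \<and> h ` K n \<subseteq> K n \<and> nowhere_dense_in (K n) cantor_set"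
  from main_K[OF assms this]
  show "\<exists>phiL phiU hh. admissible_pair phiL phiU \<and> Lelek_fence phiL phiU \<and>
              (\<exists>g. homeomorphism (fence phiL phiU) (fence phiL phiU) hh g) \<and>
              isometry_on (fence phiL phiU) (max_metric d) hh \<and>
              is_factor cantor_set h (fence phiL phiU) hh \<and>
              (\<forall>x\<in>(\<Union>n. K n). phiU x > 0)" .
qed


end
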